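(* Let $L,A,Y$ be binary and consider the 7 binary random variables $(L,A(0),A(1),Y(0,0),Y(0,1),Y(1,0),Y(1,1))$, where $A(l)$ and $Y(l,a)$ are potential outcomes, and set $A:=A(L)$, $Y(a):=Y(L,a)$. View models as subsets of the probability simplex of joint distributions of these 7 variables. Then: the full model has dimension $2^7-1=127$; the weak ignorability model $\{A\perp\!\!\!\perp Y(a)\mid L \text{ for } a=0,1\}$ has dimension 123; the strong ignorability model $\{A\perp\!\!\!\perp (Y(0),Y(1))\mid L\}$ has dimension 121; and the NPSEM-IE model, defined by mutual independence $L\perp\!\!\!\perp (A(0),A(1))\perp\!\!\!\perp (Y(0,0),Y(0,1),Y(1,0),Y(1,1))$, has dimension 19. Hence the NPSEM-IE imposes $123-19=104$ constraints beyond weak ignorability.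
   Context: Dimension refers to the dimension of the model as a (semi-algebraic) subset of the 127-dimensional probability simplex on $\{0,1\}^7$. Conditional independences given $L$ are required for each value $l\in\{0,1\}$ (with $P(L=l)>0$). *)

theory Defs
  imports "HOL-Analysis.Analysis"
begin

text \<open>Sample space of the 7 binary variables
  (L, A(0), A(1), Y(0,0), Y(0,1), Y(1,0), Y(1,1)); True encodes 1, False encodes 0.\<close>
type_synonym omega = "bool \<times> bool \<times> bool \<times> bool \<times> bool \<times> bool \<times> bool"

type_synonym dist = "real ^ omega"

definition prob_simplex :: "dist set" where
  "prob_simplex = {p. (\<forall>w. 0 \<le> p $ w) \<and> (\<Sum>w\<in>UNIV. p $ w) = 1}"

definition jprob :: "dist \<Rightarrow> (omega \<Rightarrow> bool) \<Rightarrow> real" where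
  "jprob p E = (\<Sum>w\<in>{w. E w}. p $ w)"

definition varL :: "omega \<Rightarrow> bool" where
  "varL w = (case w of (l, a0, a1, y00, y01, y10, y11) \<Rightarrow> l)"
definition varApot :: "bool \<Rightarrow> omega \<Rightarrow> bool" where
  "varApot l w = (case w of (l', a0, a1, y00, y01, y10, y11) \<Rightarrow> (if l then a1 else a0))"
definition varYpot :: "bool \<Rightarrow> bool \<Rightarrow> omega \<Rightarrow> bool" where
  "varYpot l a w = (case w of (l', a0, a1, y00, y01, y10, y11) \<Rightarrow>
      (if l then (if a then y11 else y10) else (if a then y01 else y00)))"

definition varA :: "omega \<Rightarrow> bool" where
  "varA w = varApot (varL w) w"
definition varY :: "bool \<Rightarrow> omega \<Rightarrow> bool" where
  "varY a w = varYpot (varL w) a w"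

definition cond_indep :: "dist \<Rightarrow> (omega \<Rightarrow> 'x) \<Rightarrow> (omega \<Rightarrow> 'z) \<Rightarrow> (omega \<Rightarrow> 'c) \<Rightarrow> bool" where
  "cond_indep p X Z W =
     (\<forall>c. jprob p (\<lambda>w. W w = c) > 0 \<longrightarrow>
        (\<forall>x z. jprob p (\<lambda>w. X w = x \<and> Z w = z \<and> W w = c) * jprob p (\<lambda>w. W w = c)
             = jprob p (\<lambda>w. X w = x \<and> W w = c) * jprob p (\<lambda>w. Z w = z \<and> W w = c)))"

definition indep3 :: "dist \<Rightarrow> (omega \<Rightarrow> 'x) \<Rightarrow> (omega \<Rightarrow> 'y) \<Rightarrow> (omega \<Rightarrow> 'z) \<Rightarrow> bool" where
  "indep3 p X Y Z =
     (\<forall>x y z. jprob p (\<lambda>w. X w = x \<and> Y w = y \<and> Z w = z)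
        = jprob p (\<lambda>w. X w = x) * jprob p (\<lambda>w. Y w = y) * jprob p (\<lambda>w. Z w = z))"

definition weak_ign_model :: "dist set" where
  "weak_ign_model = {p \<in> prob_simplex. \<forall>a. cond_indep p varA (varY a) varL}"

definition strong_ign_model :: "dist set" where
  "strong_ign_model = {p \<in> prob_simplex. cond_indep p varA (\<lambda>w. (varY False w, varY True w)) varL}"

definition npsem_ie_model :: "dist set" where
  "npsem_ie_model = {p \<in> prob_simplex. indep3 p varL
      (\<lambda>w. (varApot False w, varApot True w))
      (\<lambda>w. (varYpot False False w, varYpot False True w, varYpot True False w, varYpot True True w))}"

text \<open>For semi-algebraic sets this is the usual dimension.\<close>
definition sa_dim :: "'a::euclidean_space set \<Rightarrow> nat" where
  "sa_dim S = Max {d. \<exists>(V::'a set) U f. subspace V \<and> dim V = d \<and> U \<subseteq> V \<and> U \<noteq> {} \<and>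
       openin (top_of_set V) U \<and> continuous_on U f \<and> inj_on f U \<and> f ` U \<subseteq> S}"

end

theory Submission
  imports Defs
begin

lemma finite_dims: "finite {d. \<exists>(V::'a::euclidean_space set). dim V = d}"
proof -
  have "{d. \<exists>(V::'a::euclidean_space set). dim V = d} \<subseteq> {..DIM('a)}"
    using dim_subset_UNIV by blast
  then show ?thesis using finite_subset by blast
qed
lemma sa_dim_set_finite: "finite {d. \<exists>(V::'a::euclidean_space set) U f. subspace V \<and> dim V = d \<and> U \<subseteq> V \<and> U \<noteq> {} \<and>
       openin (top_of_set V) U \<and> continuous_on U f \<and> inj_on f U \<and> f ` U \<subseteq> S}"
  by (rule finite_subset[OF _ finite_dims]) blast

lemma sa_dim_eqI:
  fixes S :: "dist set" and C :: "omega set" and g :: "dist \<Rightarrow> dist"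
    and V :: "dist set" and f :: "dist \<Rightarrow> dist"
  assumes lower: "subspace V" "dim V = d" "U \<subseteq> V" "U \<noteq> {}" "openin (top_of_set V) U"
     "continuous_on U f" "inj_on f U" "f ` U \<subseteq> S"
  and glin: "linear g" and ginj: "inj_on g S" and gz: "\<And>p w. w \<in> C \<Longrightarrow> g p $ w = 0"
  and card: "card (UNIV - C) = d"
  shows "sa_dim S = d"
  unfolding sa_dim_def
proof (rule Max_eqI[OF sa_dim_set_finite])
  show "d \<in> {d. \<exists>(V::dist set) U f. subspace V \<and> dim V = d \<and> U \<subseteq> V \<and> U \<noteq> {} \<and>
       openin (top_of_set V) U \<and> continuous_on U f \<and> inj_on f U \<and> f ` U \<subseteq> S}"
    apply (rule CollectI)
    apply (rule exI[of _ V], rule exI[of _ U], rule exI[of _ f])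
    using lower by (intro conjI)
next
  fix y assume "y \<in> {d. \<exists>(V::dist set) U f. subspace V \<and> dim V = d \<and> U \<subseteq> V \<and> U \<noteq> {} \<and>
       openin (top_of_set V) U \<and> continuous_on U f \<and> inj_on f U \<and> f ` U \<subseteq> S}"
  then have "\<exists>(V::dist set) U f. subspace V \<and> dim V = y \<and> U \<subseteq> V \<and> U \<noteq> {} \<and>
       openin (top_of_set V) U \<and> continuous_on U f \<and> inj_on f U \<and> f ` U \<subseteq> S"
    by (simp only: mem_Collect_eq)
  then obtain V' :: "dist set" and U' and f' :: "dist \<Rightarrow> dist" where hh: "subspace V' \<and> dim V' = y \<and> U' \<subseteq> V' \<and> U' \<noteq> {} \<and>
       openin (top_of_set V') U' \<and> continuous_on U' f' \<and> inj_on f' U' \<and> f' ` U' \<subseteq> S"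
    by (elim exE) (erule that)
  have h: "subspace V'" "dim V' = y" "U' \<subseteq> V'" "U' \<noteq> {}"
       "openin (top_of_set V') U'" "continuous_on U' f'" "inj_on f' U'" "f' ` U' \<subseteq> S"
    using hh by simp_all
  define W where "W = {x::dist. \<forall>i. i \<notin> (UNIV - C) \<longrightarrow> x$i = 0}"
  have dW: "dim W = d" unfolding W_def card[symmetric] dim_vec_eq[symmetric]
    by (rule dim_substandard_cart)
  have sW: "subspace W" unfolding W_def subspace_def by simp
  have "dim V' \<le> dim W"
  proof (rule invariance_of_dimension_subspaces[OF h(5) h(1) sW])
    show "continuous_on U' (g \<circ> f')"
      using continuous_on_compose[OF h(6)] glin linear_continuous_on linear_conv_bounded_linear
      by blast
    show "g \<circ> f' \<in> U' \<rightarrow> W" using gz unfolding W_def by simp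
    show "inj_on (g \<circ> f') U'" using h(7,8) ginj by (meson comp_inj_on inj_on_subset)
    show "U' \<noteq> {}" by (rule h(4))
  qed
  then show "y \<le> d" using h dW by simp
qed

definition coordsub :: "omega set \<Rightarrow> dist set" where
  "coordsub C = {x. \<forall>w\<in>C. x $ w = 0}"

lemma coordsub_subspace: "subspace (coordsub C)"
  unfolding coordsub_def subspace_def by auto

lemma coordsub_dim: "dim (coordsub C) = card (UNIV - C)"
proof -
  have "coordsub C = {x::dist. \<forall>i. i \<notin> (UNIV - C) \<longrightarrow> x$i = 0}"
    unfolding coordsub_def by auto
  moreover have "dim {x::dist. \<forall>i. i \<notin> (UNIV - C) \<longrightarrow> x$i = 0} = card (UNIV - C)"
    unfolding dim_vec_eq[symmetric] by (rule dim_substandard_cart)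
  ultimately show ?thesis by simp
qed

lemma open_pos: "open {y::dist. \<forall>w. 0 < y $ w}"
proof -
  have e: "{y::dist. \<forall>w. 0 < y $ w} = (\<Inter>w\<in>UNIV. {y. y $ w > 0})" by auto
  show ?thesis unfolding e by (rule open_INT) (auto intro: open_halfspace_component_gt_cart)
qed

lemma lower_helper:
  fixes f :: "dist \<Rightarrow> dist" and S :: "dist set"
  assumes Oo: "open Ob" and cont: "continuous_on Ob f" and z: "0 \<in> Ob" "\<forall>w. 0 < f 0 $ w"
    and inj: "inj_on f (coordsub C)"
    and inS: "\<And>x. x \<in> coordsub C \<Longrightarrow> x \<in> Ob \<Longrightarrow> \<forall>w. 0 < f x $ w \<Longrightarrow> f x \<in> S"
  shows "\<exists>(V::dist set) U (g::dist \<Rightarrow> dist). subspace V \<and> dim V = card (UNIV - C) \<and> U \<subseteq> V \<and> U \<noteq> {} \<and>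
       openin (top_of_set V) U \<and> continuous_on U g \<and> inj_on g U \<and> g ` U \<subseteq> S"
proof -
  let ?O' = "{x \<in> Ob. f x \<in> {y::dist. \<forall>w. 0 < y $ w}}"
  have "?O' = Ob \<inter> f -` {y::dist. \<forall>w. 0 < y $ w}" by auto
  then have oO': "open ?O'" using continuous_open_preimage[OF cont Oo open_pos] by simp
  have 1: "subspace (coordsub C)" by (rule coordsub_subspace)
  have 2: "dim (coordsub C) = card (UNIV - C)" by (rule coordsub_dim)
  have 3: "coordsub C \<inter> ?O' \<subseteq> coordsub C" by auto
  have 4: "coordsub C \<inter> ?O' \<noteq> {}"
  proof -
    have "(0::dist) \<in> coordsub C" unfolding coordsub_def by simp
    then show ?thesis using z by blast
  qed
  have 5: "openin (top_of_set (coordsub C)) (coordsub C \<inter> ?O')"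
    using oO' by (simp add: openin_open_Int)
  have 6: "continuous_on (coordsub C \<inter> ?O') f" using cont by (rule continuous_on_subset) auto
  have 7: "inj_on f (coordsub C \<inter> ?O')" using inj by (rule inj_on_subset) auto
  have 8: "f ` (coordsub C \<inter> ?O') \<subseteq> S" using inS by auto
  show ?thesis
    apply (rule exI[of _ "coordsub C"], rule exI[of _ "coordsub C \<inter> ?O'"], rule exI[of _ f])
    using 1 2 3 4 5 6 7 8 by (intro conjI)
qed

definition ev :: "omega \<Rightarrow> dist" where "ev c = (\<chi> w. if w = c then 1 else 0)"

lemma ev_nth[simp]: "ev c $ w = (if w = c then 1 else 0)" by (simp add: ev_def)

lemma jprob_alt: "jprob p E = (\<Sum>w\<in>UNIV. if E w then p $ w else 0)"
  unfolding jprob_def by (simp add: sum.inter_filter[symmetric])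

lemma jprob_add[simp]: "jprob (p + q) E = jprob p E + jprob q E"
  unfolding jprob_def by (simp add: sum.distrib)
lemma jprob_diff[simp]: "jprob (p - q) E = jprob p E - jprob q E"
  unfolding jprob_def by (simp add: sum_subtractf)
lemma jprob_scale[simp]: "jprob (c *\<^sub>R p) E = c * jprob p E"
  unfolding jprob_def by (simp add: sum_distrib_left)
lemma jprob_zero[simp]: "jprob 0 E = 0"
  unfolding jprob_def by simp
lemma jprob_ev[simp]: "jprob (ev c) E = (if E c then 1 else 0)"
  unfolding jprob_def by simp
lemma jprob_sum: "jprob (\<Sum>j\<in>J. F j) E = (\<Sum>j\<in>J. jprob (F j) E)"
  unfolding jprob_def by (simp add: sum.swap[of _ _ J])

lemma jprob_nonneg: assumes "\<forall>w. 0 \<le> p $ w" shows "0 \<le> jprob p E"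
  unfolding jprob_def by (rule sum_nonneg) (use assms in blast)

lemma jprob_mono: "\<forall>w. 0 \<le> p $ w \<Longrightarrow> (\<And>w. E w \<Longrightarrow> F w) \<Longrightarrow> jprob p E \<le> jprob p F"
  unfolding jprob_alt by (rule sum_mono) auto

lemma jprob_split: "jprob p (\<lambda>w. P w \<and> Q w) + jprob p (\<lambda>w. \<not> P w \<and> Q w) = jprob p Q"
  unfolding jprob_alt by (simp add: sum.distrib[symmetric]) (rule sum.cong, auto)

lemma jprob_cong: "(\<And>w. E w = F w) \<Longrightarrow> jprob p E = jprob p F"
  by metis

lemma jprob_linear: "linear (\<lambda>p. jprob p E)"
  by (rule linearI) simp_all

lemma continuous_on_jprob[continuous_intros]:
  "continuous_on S h \<Longrightarrow> continuous_on S (\<lambda>x. jprob (h x) E)"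
  unfolding jprob_def by (intro continuous_intros)

lemma jprob_vals: fixes Z :: "omega \<Rightarrow> 'z::finite" shows "(\<Sum>z\<in>UNIV. jprob p (\<lambda>w. Z w = z \<and> E w)) = jprob p E"
proof -
  have inner: "(\<Sum>z\<in>UNIV. if Z w = z \<and> E w then p $ w else 0) = (if E w then p $ w else 0)" for w
  proof (cases "E w")
    case True
    then show ?thesis by (simp add: sum.delta')
  qed simp
  show ?thesis
    unfolding jprob_alt
    by (subst sum.swap) (simp only: inner)
qed

lemma jprob_total: "p \<in> prob_simplex \<Longrightarrow> jprob p (\<lambda>_. True) = 1"
  unfolding prob_simplex_def jprob_def by simp

lemma sum_prod_univ: "(\<Sum>w\<in>(UNIV::('a::finite\<times>'b::finite) set). f w) = (\<Sum>a\<in>UNIV. \<Sum>b\<in>UNIV. f (a,b))"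
  by (simp add: sum.cartesian_product UNIV_Times_UNIV[symmetric] del: UNIV_Times_UNIV)

lemma jprob_expand7: "jprob p E = (\<Sum>l\<in>UNIV. \<Sum>a0\<in>UNIV. \<Sum>a1\<in>UNIV. \<Sum>y00\<in>UNIV. \<Sum>y01\<in>UNIV. \<Sum>y10\<in>UNIV. \<Sum>y11\<in>UNIV.
    if E (l,a0,a1,y00,y01,y10,y11) then p $ (l,a0,a1,y00,y01,y10,y11) else 0)"
  unfolding jprob_alt by (simp add: sum_prod_univ)

definition p0 :: dist where "p0 = (\<chi> w. 1/128)"

lemma p0_total: "jprob p0 (\<lambda>_. True) = 1"
  unfolding jprob_expand7 p0_def by (simp add: UNIV_bool)

lemmas var_defs = varA_def varY_def varL_def varApot_def varYpot_def


lemma simplex_iff: "p \<in> prob_simplex \<longleftrightarrow> (\<forall>w. 0 \<le> p $ w) \<and> jprob p (\<lambda>_. True) = 1"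
  unfolding prob_simplex_def jprob_def by simp

definition w0 :: omega where "w0 = (False,False,True,False,False,False,False)"

lemma card_omega: "CARD(omega) = 128" by simp

section \<open>The full simplex\<close>

definition gS :: "dist \<Rightarrow> dist" where "gS p = p - (p $ w0) *\<^sub>R ev w0"
definition fS :: "dist \<Rightarrow> dist" where "fS x = p0 + x - jprob x (\<lambda>_. True) *\<^sub>R ev w0"

lemma sa_dim_simplex: "sa_dim prob_simplex = 127"
proof -
  have ex: "\<exists>(V::dist set) U (f::dist \<Rightarrow> dist). subspace V \<and> dim V = card (UNIV - {w0}) \<and> U \<subseteq> V \<and> U \<noteq> {} \<and>
       openin (top_of_set V) U \<and> continuous_on U f \<and> inj_on f U \<and> f ` U \<subseteq> prob_simplex"
  proof (rule lower_helper[where Ob=UNIV and f=fS])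
    show "continuous_on UNIV fS" unfolding fS_def by (intro continuous_intros)
    show "\<forall>w. 0 < fS 0 $ w" by (simp add: fS_def p0_def)
    show "inj_on fS (coordsub {w0})"
    proof (rule inj_onI)
      fix x y assume x: "x \<in> coordsub {w0}" and y: "y \<in> coordsub {w0}" and e: "fS x = fS y"
      show "x = y" unfolding vec_eq_iff
      proof
        fix w
        have "fS x $ w = fS y $ w" using e by simp
        then show "x $ w = y $ w" using x y by (cases "w = w0") (auto simp: fS_def coordsub_def)
      qed
    qed
    fix x assume "\<forall>w. 0 < fS x $ w"
    then show "fS x \<in> prob_simplex"
      unfolding simplex_iff by (auto simp: fS_def p0_total less_imp_le)
  qed simp_all
  have c0: "card (UNIV - {w0}) = CARD(omega) - 1" by (rule card_Diff_singleton) (rule UNIV_I)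
  have c: "card (UNIV - {w0}) = 127" unfolding c0 card_omega by simp
  obtain V :: "dist set" and U and f :: "dist \<Rightarrow> dist" where hh: "subspace V \<and> dim V = 127 \<and> U \<subseteq> V \<and> U \<noteq> {} \<and>
       openin (top_of_set V) U \<and> continuous_on U f \<and> inj_on f U \<and> f ` U \<subseteq> prob_simplex"
    using ex unfolding c by (elim exE) (erule that)
  have h: "subspace V" "dim V = 127" "U \<subseteq> V" "U \<noteq> {}"
       "openin (top_of_set V) U" "continuous_on U f" "inj_on f U" "f ` U \<subseteq> prob_simplex"
    using hh by simp_all
  show ?thesis
    proof (rule sa_dim_eqI[OF h, where g=gS and C="{w0}"])
      show "linear gS" unfolding gS_def by (rule linearI) (simp_all add: algebra_simps)
      show "inj_on gS prob_simplex"
      proof (rule inj_onI)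
        fix p q assume p: "p \<in> prob_simplex" and q: "q \<in> prob_simplex" and e: "gS p = gS q"
        have d: "p - q = (p $ w0 - q $ w0) *\<^sub>R ev w0" using e unfolding gS_def
          by (simp add: algebra_simps)
        have "jprob (p - q) (\<lambda>_. True) = 0" using p q by (simp add: jprob_total)
        then have "p $ w0 - q $ w0 = 0" unfolding d by simp
        then show "p = q" using d by simp
      qed
      show "\<And>p w. w \<in> {w0} \<Longrightarrow> gS p $ w = 0" by (simp add: gS_def)
    qed (rule c)
qed


lemma ci_from_T:
  fixes X :: "omega \<Rightarrow> bool" and Z :: "omega \<Rightarrow> 'z::finite" and W :: "omega \<Rightarrow> 'c"
  assumes h: "\<And>c z. jprob p (\<lambda>w. W w = c) > 0 \<Longrightarrow> z \<noteq> zb \<Longrightarrow>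
     jprob p (\<lambda>w. X w = True \<and> Z w = z \<and> W w = c) * jprob p (\<lambda>w. W w = c)
       = jprob p (\<lambda>w. X w = True \<and> W w = c) * jprob p (\<lambda>w. Z w = z \<and> W w = c)"
  shows "cond_indep p X Z W"
  unfolding cond_indep_def
proof (intro allI impI)
  fix c x z assume spos: "jprob p (\<lambda>w. W w = c) > 0"
  define n where "n x z = jprob p (\<lambda>w. X w = x \<and> Z w = z \<and> W w = c)" for x z
  define R where "R x = jprob p (\<lambda>w. X w = x \<and> W w = c)" for x
  define Cz where "Cz z = jprob p (\<lambda>w. Z w = z \<and> W w = c)" for z
  define s where "s = jprob p (\<lambda>w. W w = c)"
  have sumn: "(\<Sum>z\<in>UNIV. n x z) = R x" for x
  proof -
    have "(\<Sum>z\<in>UNIV. n x z) = (\<Sum>z\<in>UNIV. jprob p (\<lambda>w. Z w = z \<and> (X w = x \<and> W w = c)))"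
      unfolding n_def by (intro sum.cong refl jprob_cong) auto
    also have "\<dots> = R x" unfolding R_def by (rule jprob_vals)
    finally show ?thesis .
  qed
  have sumC: "(\<Sum>z\<in>UNIV. Cz z) = s" unfolding Cz_def s_def by (rule jprob_vals)
  have nTF: "n True z + n False z = Cz z" for z
  proof -
    have "n True z + n False z = jprob p (\<lambda>w. X w \<and> (Z w = z \<and> W w = c)) + jprob p (\<lambda>w. \<not> X w \<and> (Z w = z \<and> W w = c))"
      unfolding n_def by (intro arg_cong2[where f="(+)"] jprob_cong) auto
    also have "\<dots> = Cz z" unfolding Cz_def by (rule jprob_split)
    finally show ?thesis .
  qed
  have RTF: "R True + R False = s"
  proof -
    have "R True + R False = jprob p (\<lambda>w. X w \<and> W w = c) + jprob p (\<lambda>w. \<not> X w \<and> W w = c)"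
      unfolding R_def by (intro arg_cong2[where f="(+)"] jprob_cong) auto
    also have "\<dots> = s" unfolding s_def by (rule jprob_split)
    finally show ?thesis .
  qed
  have hT: "n True z * s = R True * Cz z" if "z \<noteq> zb" for z
    using h[OF spos that] unfolding n_def R_def Cz_def s_def .
  have hT0: "n True zb * s = R True * Cz zb"
  proof -
    have r1: "n True zb = R True - (\<Sum>z\<in>UNIV - {zb}. n True z)"
      using sumn[of True] by (simp add: sum.remove[of UNIV zb])
    have r2: "Cz zb = s - (\<Sum>z\<in>UNIV - {zb}. Cz z)"
      using sumC by (simp add: sum.remove[of UNIV zb])
    have "(\<Sum>z\<in>UNIV - {zb}. n True z) * s = R True * (\<Sum>z\<in>UNIV - {zb}. Cz z)"
      by (simp add: sum_distrib_left sum_distrib_right hT)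
    then show ?thesis unfolding r1 r2 by (simp add: algebra_simps)
  qed
  have allT: "n True z * s = R True * Cz z" for z
    using hT hT0 by (cases "z = zb") auto
  have "n x z * s = R x * Cz z"
  proof (cases x)
    case True then show ?thesis using allT by simp
  next
    case False
    have "n False z * s = (Cz z - n True z) * s" using nTF[of z] by simp
    also have "\<dots> = Cz z * (s - R True)" using allT[of z] by (simp add: algebra_simps)
    also have "\<dots> = R False * Cz z" using RTF[symmetric] by (simp add: algebra_simps)
    finally show ?thesis using False by simp
  qed
  then show "jprob p (\<lambda>w. X w = x \<and> Z w = z \<and> W w = c) * jprob p (\<lambda>w. W w = c) =
       jprob p (\<lambda>w. X w = x \<and> W w = c) * jprob p (\<lambda>w. Z w = z \<and> W w = c)"
    unfolding n_def R_def Cz_def s_def .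
qed

lemma rank1_eq:
  assumes p: "\<forall>w. 0 \<le> p $ w" and q: "\<forall>w. 0 \<le> q $ w"
    and NS: "\<And>w. N w \<Longrightarrow> S w"
    and eS: "jprob p S = jprob q S" and eR: "jprob p R = jprob q R" and eC: "jprob p Cv = jprob q Cv"
    and hp: "jprob p S > 0 \<Longrightarrow> jprob p N * jprob p S = jprob p R * jprob p Cv"
    and hq: "jprob q S > 0 \<Longrightarrow> jprob q N * jprob q S = jprob q R * jprob q Cv"
  shows "jprob p N = jprob q N"
proof (cases "jprob p S > 0")
  case True
  then have "jprob p N * jprob p S = jprob q N * jprob p S" using hp hq eS eR eC by simp
  then show ?thesis using True by simp
next
  case False
  then have s0: "jprob p S = 0" using jprob_nonneg[OF p, of S] by simp
  have "0 \<le> jprob p N" "jprob p N \<le> jprob p S" "0 \<le> jprob q N" "jprob q N \<le> jprob q S"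
    using jprob_nonneg[OF p] jprob_nonneg[OF q] jprob_mono[OF p NS] jprob_mono[OF q NS] by auto
  then show ?thesis using s0 eS by simp
qed

definition cell :: "bool \<Rightarrow> bool \<Rightarrow> bool \<Rightarrow> bool \<Rightarrow> omega" where
  "cell l x y0 y1 = (if l then (True,False,x,False,False,y0,y1) else (False,x,False,y0,y1,False,False))"

definition pc :: "bool \<times> bool \<times> bool \<Rightarrow> omega" where
  "pc j = (case j of (l,y0,y1) \<Rightarrow> cell l True y0 y1)"

definition vd :: "bool \<times> bool \<times> bool \<Rightarrow> dist" where
  "vd j = (case j of (l,y0,y1) \<Rightarrow>
     ev (cell l True y0 y1) - ev (cell l True False False) - ev (cell l False y0 y1) + ev (cell l False False False))"

definition Js :: "(bool \<times> bool \<times> bool) set" where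
  "Js = {(l,y0,y1). (y0,y1) \<noteq> (False,False)}"

definition gJ :: "(bool \<times> bool \<times> bool) set \<Rightarrow> dist \<Rightarrow> dist" where
  "gJ J p = p - (p $ w0) *\<^sub>R ev w0 - (\<Sum>j\<in>J. (p $ pc j) *\<^sub>R vd j)"

lemma vd_pc: "j \<in> Js \<Longrightarrow> k \<in> Js \<Longrightarrow> vd j $ pc k = (if j = k then 1 else 0)"
  unfolding Js_def vd_def pc_def cell_def
  by (cases j; cases k) (auto split: if_splits)

lemma vd_w0: "vd j $ w0 = 0"
  unfolding vd_def w0_def cell_def by (cases j) auto

lemma w0_pc: "w0 \<noteq> pc k"
  unfolding pc_def w0_def cell_def by (cases k) auto

lemma jprob_vd: "jprob (vd j) E = (case j of (l,y0,y1) \<Rightarrow>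
    (if E (cell l True y0 y1) then 1 else 0) - (if E (cell l True False False) then 1 else 0)
  - (if E (cell l False y0 y1) then 1 else 0) + (if E (cell l False False False) then 1 else 0))"
  unfolding vd_def by (cases j) simp

lemma gJ_linear: "linear (gJ J)"
  unfolding gJ_def
  by (rule linearI) (simp_all add: algebra_simps sum.distrib scaleR_add_left scale_sum_right sum_subtractf)


lemma gJ_pc: assumes J: "J \<subseteq> Js" and k: "k \<in> J" shows "gJ J p $ pc k = 0"
proof -
  have "(\<Sum>j\<in>J. p $ pc j * vd j $ pc k) = (\<Sum>j\<in>J. if j = k then p $ pc j else 0)"
    by (intro sum.cong refl) (auto simp: vd_pc[OF subsetD[OF J] subsetD[OF J k]])
  also have "\<dots> = p $ pc k" using k by simp
  finally show ?thesis unfolding gJ_def using w0_pc[of k] by (simp add: eq_commute[of w0])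
qed

lemma gJ_w0: "gJ J p $ w0 = 0"
  unfolding gJ_def by (simp add: vd_w0)

lemma gJ_kernel: "gJ J d = 0 \<Longrightarrow> d = (d $ w0) *\<^sub>R ev w0 + (\<Sum>j\<in>J. (d $ pc j) *\<^sub>R vd j)"
  unfolding gJ_def by (simp add: algebra_simps)

lemma gJ_vd: assumes J: "J \<subseteq> Js" and k: "k \<in> J" shows "gJ J (vd k) = 0"
proof -
  have "(\<Sum>j\<in>J. (vd k $ pc j) *\<^sub>R vd j) = (\<Sum>j\<in>J. if j = k then vd j else 0)"
    by (intro sum.cong refl) (auto simp: vd_pc[OF subsetD[OF J k] subsetD[OF J]])
  also have "\<dots> = vd k" using k by simp
  finally show ?thesis unfolding gJ_def by (simp add: vd_w0)
qed

lemma gJ_ev: "gJ J (ev w0) = 0"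
  unfolding gJ_def using w0_pc by (simp add: eq_commute[of w0])

lemma gJ_id: "x \<in> coordsub (insert w0 (pc ` J)) \<Longrightarrow> gJ J x = x"
  unfolding gJ_def coordsub_def by simp

lemma gJ_sum: "finite K \<Longrightarrow> gJ J (\<Sum>k\<in>K. F k) = (\<Sum>k\<in>K. gJ J (F k))"
  using linear_sum[OF gJ_linear] by blast


lemma jprob_vd_true: "jprob (vd j) (\<lambda>_. True) = 0"
  by (cases j) (simp add: jprob_vd)

lemma gJ_inj:
  fixes N Sv R Cv :: "bool \<times> bool \<times> bool \<Rightarrow> omega \<Rightarrow> bool"
  assumes J: "J \<subseteq> Js" and Msub: "M \<subseteq> prob_simplex"
  and vN: "\<And>j k. j \<in> J \<Longrightarrow> k \<in> J \<Longrightarrow> jprob (vd k) (N j) = (if k = j then 1 else 0)"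
  and vS: "\<And>j k. j \<in> J \<Longrightarrow> k \<in> J \<Longrightarrow> jprob (vd k) (Sv j) = 0"
  and vR: "\<And>j k. j \<in> J \<Longrightarrow> k \<in> J \<Longrightarrow> jprob (vd k) (R j) = 0"
  and vC: "\<And>j k. j \<in> J \<Longrightarrow> k \<in> J \<Longrightarrow> jprob (vd k) (Cv j) = 0"
  and NS: "\<And>j w. j \<in> J \<Longrightarrow> N j w \<Longrightarrow> Sv j w"
  and ci: "\<And>j p. j \<in> J \<Longrightarrow> p \<in> M \<Longrightarrow> jprob p (Sv j) > 0 \<Longrightarrow>
             jprob p (N j) * jprob p (Sv j) = jprob p (R j) * jprob p (Cv j)"
  shows "inj_on (gJ J) M"
proof (rule inj_onI)
  fix p q assume p: "p \<in> M" and q: "q \<in> M" and e: "gJ J p = gJ J q"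
  have fJ: "finite J" by simp
  define d where "d = p - q"
  have "gJ J d = 0" unfolding d_def using e linear_diff[OF gJ_linear] by simp
  then have dk: "d = (d $ w0) *\<^sub>R ev w0 + (\<Sum>j\<in>J. (d $ pc j) *\<^sub>R vd j)" by (rule gJ_kernel)
  have jd: "jprob d E = d $ w0 * (if E w0 then 1 else 0) + (\<Sum>k\<in>J. d $ pc k * jprob (vd k) E)" for E
    by (subst dk) (simp add: jprob_sum)
  have pS: "p \<in> prob_simplex" "q \<in> prob_simplex" using p q Msub by auto
  have pn: "\<forall>w. 0 \<le> p $ w" "\<forall>w. 0 \<le> q $ w" using pS unfolding prob_simplex_def by auto
  have "jprob d (\<lambda>_. True) = 0" unfolding d_def using pS by (simp add: jprob_total)
  then have dw0: "d $ w0 = 0" using jd[of "\<lambda>_. True"] by (simp add: jprob_vd_true)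
  have dpc: "d $ pc j = 0" if j: "j \<in> J" for j
  proof -
    have "jprob d (N j) = (\<Sum>k\<in>J. d $ pc k * (if k = j then 1 else 0))"
      unfolding jd dw0 using vN[OF j] by simp
    also have "\<dots> = d $ pc j" using j by (simp add: if_distrib[of "\<lambda>x. _ * x"] sum.delta cong: if_cong)
    finally have dN: "jprob d (N j) = d $ pc j" .
    have "jprob d (Sv j) = 0" "jprob d (R j) = 0" "jprob d (Cv j) = 0"
      unfolding jd dw0 using vS[OF j] vR[OF j] vC[OF j] by simp_all
    then have eq: "jprob p (Sv j) = jprob q (Sv j)" "jprob p (R j) = jprob q (R j)" "jprob p (Cv j) = jprob q (Cv j)"
      unfolding d_def by simp_all
    have "jprob p (N j) = jprob q (N j)"
      by (rule rank1_eq[OF pn NS[OF j] eq ci[OF j p] ci[OF j q]]) 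
    then show ?thesis using dN unfolding d_def by simp
  qed
  have "d = 0" using dk dw0 dpc by simp
  then show "p = q" unfolding d_def by simp
qed


definition zmap :: "dist \<Rightarrow> dist" where
  "zmap x = p0 + x - jprob x (\<lambda>_. True) *\<^sub>R ev w0"

lemma zmap_cont: "continuous_on A zmap"
  unfolding zmap_def by (intro continuous_intros)

lemma zmap0: "zmap 0 = p0" unfolding zmap_def by simp

lemma zmap_total: "jprob (zmap x) (\<lambda>_. True) = 1"
  unfolding zmap_def by (simp add: p0_total)

lemma gJ_lower:
  fixes N Sv R Cv :: "bool \<times> bool \<times> bool \<Rightarrow> omega \<Rightarrow> bool"
  assumes J: "J \<subseteq> Js"
  and vN: "\<And>j k. j \<in> J \<Longrightarrow> k \<in> J \<Longrightarrow> jprob (vd k) (N j) = (if k = j then 1 else 0)"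
  and vS: "\<And>j k. j \<in> J \<Longrightarrow> k \<in> J \<Longrightarrow> jprob (vd k) (Sv j) = 0"
  and vR: "\<And>j k. j \<in> J \<Longrightarrow> k \<in> J \<Longrightarrow> jprob (vd k) (R j) = 0"
  and vC: "\<And>j k. j \<in> J \<Longrightarrow> k \<in> J \<Longrightarrow> jprob (vd k) (Cv j) = 0"
  and crit: "\<And>q. \<forall>w. 0 \<le> q $ w \<Longrightarrow> jprob q (\<lambda>_. True) = 1 \<Longrightarrow>
      (\<And>j. j \<in> J \<Longrightarrow> jprob q (Sv j) > 0 \<Longrightarrow> jprob q (N j) * jprob q (Sv j) = jprob q (R j) * jprob q (Cv j))
      \<Longrightarrow> q \<in> M"
  and p0S: "\<And>j. j \<in> J \<Longrightarrow> jprob p0 (Sv j) > 0"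
  and p0N: "\<And>j. j \<in> J \<Longrightarrow> jprob p0 (N j) * jprob p0 (Sv j) = jprob p0 (R j) * jprob p0 (Cv j)"
  shows "\<exists>(V::dist set) U (g::dist \<Rightarrow> dist). subspace V \<and> dim V = card (UNIV - insert w0 (pc ` J)) \<and> U \<subseteq> V \<and> U \<noteq> {} \<and>
       openin (top_of_set V) U \<and> continuous_on U g \<and> inj_on g U \<and> g ` U \<subseteq> M"
proof -
  have fJ: "finite J" by simp
  define t where "t j q = jprob q (R j) * jprob q (Cv j) / jprob q (Sv j) - jprob q (N j)" for j q
  define f where "f x = zmap x + (\<Sum>j\<in>J. t j (zmap x) *\<^sub>R vd j)" for x
  define Ob where "Ob = {x. \<forall>j\<in>J. 0 < jprob (zmap x) (Sv j)}"
  have Obe: "Ob = (\<Inter>j\<in>J. {x. 0 < jprob (zmap x) (Sv j)})" unfolding Ob_def by auto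
  have oOb: "open Ob" unfolding Obe
    by (intro open_INT fJ ballI open_Collect_less continuous_intros zmap_cont)
  have t0: "t j p0 = 0" if "j \<in> J" for j
    using p0S[OF that] p0N[OF that] unfolding t_def by (simp add: field_simps)
  have f0: "f 0 = p0" unfolding f_def zmap0 using t0 by simp
  have jf: "jprob (f x) E = jprob (zmap x) E + (\<Sum>j\<in>J. t j (zmap x) * jprob (vd j) E)" for x E
    unfolding f_def by (simp add: jprob_sum)
  show ?thesis
  proof (rule lower_helper[where Ob=Ob and f=f])
    show "open Ob" by (rule oOb)
    show "continuous_on Ob f" unfolding f_def t_def
      by (intro continuous_intros zmap_cont continuous_on_divide) (auto simp: Ob_def)
    show "0 \<in> Ob" unfolding Ob_def using p0S by (simp add: zmap0)
    show "\<forall>w. 0 < f 0 $ w" unfolding f0 by (simp add: p0_def)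
    show "inj_on f (coordsub (insert w0 (pc ` J)))"
    proof (rule inj_onI)
      fix x y assume x: "x \<in> coordsub (insert w0 (pc ` J))" and y: "y \<in> coordsub (insert w0 (pc ` J))"
        and e: "f x = f y"
      have g: "gJ J (f x) = gJ J p0 + x" if "x \<in> coordsub (insert w0 (pc ` J))" for x
      proof -
        have "gJ J (f x) = gJ J (zmap x) + (\<Sum>j\<in>J. t j (zmap x) *\<^sub>R gJ J (vd j))"
          unfolding f_def using linear_add[OF gJ_linear] linear_scale[OF gJ_linear] gJ_sum[OF fJ]
          by simp
        also have "\<dots> = gJ J (zmap x)" using gJ_vd[OF J] by simp
        also have "\<dots> = gJ J p0 + x"
          unfolding zmap_def using linear_add[OF gJ_linear] linear_diff[OF gJ_linear] linear_scale[OF gJ_linear]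
            gJ_ev gJ_id[OF that] by simp
        finally show ?thesis .
      qed
      have "gJ J p0 + x = gJ J p0 + y" using g[OF x] g[OF y] e by metis
      then show "x = y" by (rule add_left_imp_eq)
    qed
    fix x assume x: "x \<in> coordsub (insert w0 (pc ` J))" "x \<in> Ob" and pos: "\<forall>w. 0 < f x $ w"
    show "f x \<in> M"
    proof (rule crit)
      show "\<forall>w. 0 \<le> f x $ w" using pos less_imp_le by blast
      show "jprob (f x) (\<lambda>_. True) = 1" unfolding jf by (simp add: zmap_total jprob_vd_true)
      fix j assume j: "j \<in> J"
      have sS: "jprob (f x) (Sv j) = jprob (zmap x) (Sv j)" unfolding jf using vS[OF j] by simp
      have sR: "jprob (f x) (R j) = jprob (zmap x) (R j)" unfolding jf using vR[OF j] by simp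
      have sC: "jprob (f x) (Cv j) = jprob (zmap x) (Cv j)" unfolding jf using vC[OF j] by simp
      have "jprob (f x) (N j) = jprob (zmap x) (N j) + (\<Sum>k\<in>J. t k (zmap x) * (if j = k then 1 else 0))"
        unfolding jf using vN[OF j] by (simp add: eq_commute)
      also have "\<dots> = jprob (zmap x) (N j) + t j (zmap x)"
        using j by (simp add: if_distrib[of "\<lambda>x. _ * x"] sum.delta cong: if_cong)
      finally have sN: "jprob (f x) (N j) = jprob (zmap x) (R j) * jprob (zmap x) (Cv j) / jprob (zmap x) (Sv j)"
        unfolding t_def by simp
      have spos: "0 < jprob (zmap x) (Sv j)" using x(2) j unfolding Ob_def by auto
      show "jprob (f x) (N j) * jprob (f x) (Sv j) = jprob (f x) (R j) * jprob (f x) (Cv j)"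
        unfolding sN sS sR sC using spos by simp
    qed
  qed
qed


definition Sv :: "bool \<times> bool \<times> bool \<Rightarrow> omega \<Rightarrow> bool" where
  "Sv j = (\<lambda>w. varL w = fst j)"
definition Rv :: "bool \<times> bool \<times> bool \<Rightarrow> omega \<Rightarrow> bool" where
  "Rv j = (\<lambda>w. varA w = True \<and> varL w = fst j)"
definition NW :: "bool \<times> bool \<times> bool \<Rightarrow> omega \<Rightarrow> bool" where
  "NW j = (\<lambda>w. varA w = True \<and> varY (snd (snd j)) w = True \<and> varL w = fst j)"
definition CW :: "bool \<times> bool \<times> bool \<Rightarrow> omega \<Rightarrow> bool" where
  "CW j = (\<lambda>w. varY (snd (snd j)) w = True \<and> varL w = fst j)"
definition NSt :: "bool \<times> bool \<times> bool \<Rightarrow> omega \<Rightarrow> bool" where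
  "NSt j = (\<lambda>w. varA w = True \<and> (varY False w, varY True w) = snd j \<and> varL w = fst j)"
definition CSt :: "bool \<times> bool \<times> bool \<Rightarrow> omega \<Rightarrow> bool" where
  "CSt j = (\<lambda>w. (varY False w, varY True w) = snd j \<and> varL w = fst j)"

definition Jw :: "(bool \<times> bool \<times> bool) set" where
  "Jw = {(False,True,False),(False,False,True),(True,True,False),(True,False,True)}"

lemma Jw_sub: "Jw \<subseteq> Js" unfolding Jw_def Js_def by auto

lemma Jw_vN: "j \<in> Jw \<Longrightarrow> k \<in> Jw \<Longrightarrow> jprob (vd k) (NW j) = (if k = j then 1 else 0)"
  unfolding Jw_def NW_def by (auto simp: jprob_vd cell_def var_defs)
lemma Jw_vS: "j \<in> Jw \<Longrightarrow> k \<in> Jw \<Longrightarrow> jprob (vd k) (Sv j) = 0"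
  unfolding Jw_def Sv_def by (auto simp: jprob_vd cell_def var_defs)
lemma Jw_vR: "j \<in> Jw \<Longrightarrow> k \<in> Jw \<Longrightarrow> jprob (vd k) (Rv j) = 0"
  unfolding Jw_def Rv_def by (auto simp: jprob_vd cell_def var_defs)
lemma Jw_vC: "j \<in> Jw \<Longrightarrow> k \<in> Jw \<Longrightarrow> jprob (vd k) (CW j) = 0"
  unfolding Jw_def CW_def by (auto simp: jprob_vd cell_def var_defs)

lemma Jw_p0S: "j \<in> Jw \<Longrightarrow> jprob p0 (Sv j) > 0"
  unfolding Jw_def Sv_def by (auto simp: jprob_expand7 p0_def var_defs UNIV_bool)
lemma Jw_p0N: "j \<in> Jw \<Longrightarrow> jprob p0 (NW j) * jprob p0 (Sv j) = jprob p0 (Rv j) * jprob p0 (CW j)"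
  unfolding Jw_def Sv_def NW_def Rv_def CW_def by (auto simp: jprob_expand7 p0_def var_defs UNIV_bool)


lemma card_C: fixes C :: "omega set" assumes "card C = k" shows "card (UNIV - C) = 128 - k"
proof -
  have "card (UNIV - C) = CARD(omega) - card C" by (rule card_Diff_subset) simp_all
  then show ?thesis using assms card_omega by simp
qed

lemma weak_crit:
  assumes "\<forall>w. 0 \<le> q $ w" "jprob q (\<lambda>_. True) = 1"
    and h: "\<And>j. j \<in> Jw \<Longrightarrow> jprob q (Sv j) > 0 \<Longrightarrow> jprob q (NW j) * jprob q (Sv j) = jprob q (Rv j) * jprob q (CW j)"
  shows "q \<in> weak_ign_model"
  unfolding weak_ign_model_def
proof (intro CollectI conjI allI)
  show "q \<in> prob_simplex" using assms(1,2) by (simp add: simplex_iff)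
  fix a
  show "cond_indep q varA (varY a) varL"
  proof (rule ci_from_T[where zb=False])
    fix c z assume s: "jprob q (\<lambda>w. varL w = c) > 0" and z: "z \<noteq> False"
    have j: "(c, \<not> a, a) \<in> Jw" unfolding Jw_def by (cases c; cases a) auto
    show "jprob q (\<lambda>w. varA w = True \<and> varY a w = z \<and> varL w = c) * jprob q (\<lambda>w. varL w = c) =
          jprob q (\<lambda>w. varA w = True \<and> varL w = c) * jprob q (\<lambda>w. varY a w = z \<and> varL w = c)"
      using h[OF j] s z unfolding NW_def Sv_def Rv_def CW_def by simp
  qed
qed

lemma weak_ci:
  assumes j: "j \<in> Jw" and p: "p \<in> weak_ign_model" and s: "jprob p (Sv j) > 0"
  shows "jprob p (NW j) * jprob p (Sv j) = jprob p (Rv j) * jprob p (CW j)"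
proof -
  have "cond_indep p varA (varY (snd (snd j))) varL" using p unfolding weak_ign_model_def by simp
  then show ?thesis using s unfolding cond_indep_def NW_def Sv_def Rv_def CW_def by blast
qed

lemma sa_dim_weak: "sa_dim weak_ign_model = 123"
proof -
  have c: "card (UNIV - insert w0 (pc ` Jw)) = 123"
  proof -
    have "card (insert w0 (pc ` Jw)) = 5" unfolding Jw_def pc_def cell_def w0_def by simp
    then show ?thesis using card_C by simp
  qed
  have ex: "\<exists>(V::dist set) U (g::dist \<Rightarrow> dist). subspace V \<and> dim V = card (UNIV - insert w0 (pc ` Jw)) \<and> U \<subseteq> V \<and> U \<noteq> {} \<and>
       openin (top_of_set V) U \<and> continuous_on U g \<and> inj_on g U \<and> g ` U \<subseteq> weak_ign_model"
    by (rule gJ_lower[OF Jw_sub Jw_vN Jw_vS Jw_vR Jw_vC weak_crit Jw_p0S Jw_p0N])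
  obtain V :: "dist set" and U and f :: "dist \<Rightarrow> dist" where hh: "subspace V \<and> dim V = 123 \<and> U \<subseteq> V \<and> U \<noteq> {} \<and>
       openin (top_of_set V) U \<and> continuous_on U f \<and> inj_on f U \<and> f ` U \<subseteq> weak_ign_model"
    using ex unfolding c by (elim exE) (erule that)
  have h: "subspace V" "dim V = 123" "U \<subseteq> V" "U \<noteq> {}"
       "openin (top_of_set V) U" "continuous_on U f" "inj_on f U" "f ` U \<subseteq> weak_ign_model"
    using hh by simp_all
  show ?thesis
  proof (rule sa_dim_eqI[OF h gJ_linear _ _ c])
    show "inj_on (gJ Jw) weak_ign_model"
      by (rule gJ_inj[OF Jw_sub _ Jw_vN Jw_vS Jw_vR Jw_vC _ weak_ci])
         (auto simp: weak_ign_model_def NW_def Sv_def)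
    show "\<And>p w. w \<in> insert w0 (pc ` Jw) \<Longrightarrow> gJ Jw p $ w = 0"
      using gJ_w0 gJ_pc[OF Jw_sub] by auto
  qed
qed


section \<open>Strong ignorability\<close>

definition Jst :: "(bool \<times> bool \<times> bool) set" where
  "Jst = {(False,True,False),(False,False,True),(False,True,True),(True,True,False),(True,False,True),(True,True,True)}"

lemma Jst_sub: "Jst \<subseteq> Js" unfolding Jst_def Js_def by auto

lemma Jst_vN: "j \<in> Jst \<Longrightarrow> k \<in> Jst \<Longrightarrow> jprob (vd k) (NSt j) = (if k = j then 1 else 0)"
  unfolding Jst_def NSt_def by (auto simp: jprob_vd cell_def var_defs)
lemma Jst_vS: "j \<in> Jst \<Longrightarrow> k \<in> Jst \<Longrightarrow> jprob (vd k) (Sv j) = 0"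
  unfolding Jst_def Sv_def by (auto simp: jprob_vd cell_def var_defs)
lemma Jst_vR: "j \<in> Jst \<Longrightarrow> k \<in> Jst \<Longrightarrow> jprob (vd k) (Rv j) = 0"
  unfolding Jst_def Rv_def by (auto simp: jprob_vd cell_def var_defs)
lemma Jst_vC: "j \<in> Jst \<Longrightarrow> k \<in> Jst \<Longrightarrow> jprob (vd k) (CSt j) = 0"
  unfolding Jst_def CSt_def by (auto simp: jprob_vd cell_def var_defs)

lemma Jst_p0S: "j \<in> Jst \<Longrightarrow> jprob p0 (Sv j) > 0"
  unfolding Jst_def Sv_def by (auto simp: jprob_expand7 p0_def var_defs UNIV_bool)
lemma Jst_p0N: "j \<in> Jst \<Longrightarrow> jprob p0 (NSt j) * jprob p0 (Sv j) = jprob p0 (Rv j) * jprob p0 (CSt j)"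
  unfolding Jst_def Sv_def NSt_def Rv_def CSt_def by (auto simp: jprob_expand7 p0_def var_defs UNIV_bool)

lemma strong_crit:
  assumes "\<forall>w. 0 \<le> q $ w" "jprob q (\<lambda>_. True) = 1"
    and h: "\<And>j. j \<in> Jst \<Longrightarrow> jprob q (Sv j) > 0 \<Longrightarrow> jprob q (NSt j) * jprob q (Sv j) = jprob q (Rv j) * jprob q (CSt j)"
  shows "q \<in> strong_ign_model"
  unfolding strong_ign_model_def
proof (intro CollectI conjI)
  show "q \<in> prob_simplex" using assms(1,2) by (simp add: simplex_iff)
  show "cond_indep q varA (\<lambda>w. (varY False w, varY True w)) varL"
  proof (rule ci_from_T[where zb="(False,False)"])
    fix c z assume s: "jprob q (\<lambda>w. varL w = c) > 0" and z: "z \<noteq> (False, False)"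
    have j: "(c, z) \<in> Jst" using z unfolding Jst_def by (cases c; cases z) auto
    show "jprob q (\<lambda>w. varA w = True \<and> (varY False w, varY True w) = z \<and> varL w = c) * jprob q (\<lambda>w. varL w = c) =
          jprob q (\<lambda>w. varA w = True \<and> varL w = c) * jprob q (\<lambda>w. (varY False w, varY True w) = z \<and> varL w = c)"
      using h[OF j] s unfolding NSt_def Sv_def Rv_def CSt_def by simp
  qed
qed

lemma strong_ci:
  assumes j: "j \<in> Jst" and p: "p \<in> strong_ign_model" and s: "jprob p (Sv j) > 0"
  shows "jprob p (NSt j) * jprob p (Sv j) = jprob p (Rv j) * jprob p (CSt j)"
proof -
  have "cond_indep p varA (\<lambda>w. (varY False w, varY True w)) varL" using p unfolding strong_ign_model_def by simp
  then show ?thesis using s unfolding cond_indep_def NSt_def Sv_def Rv_def CSt_def by blast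
qed

lemma sa_dim_strong: "sa_dim strong_ign_model = 121"
proof -
  have c: "card (UNIV - insert w0 (pc ` Jst)) = 121"
  proof -
    have "card (insert w0 (pc ` Jst)) = 7" unfolding Jst_def pc_def cell_def w0_def by simp
    then show ?thesis using card_C by simp
  qed
  have ex: "\<exists>(V::dist set) U (g::dist \<Rightarrow> dist). subspace V \<and> dim V = card (UNIV - insert w0 (pc ` Jst)) \<and> U \<subseteq> V \<and> U \<noteq> {} \<and>
       openin (top_of_set V) U \<and> continuous_on U g \<and> inj_on g U \<and> g ` U \<subseteq> strong_ign_model"
    by (rule gJ_lower[OF Jst_sub Jst_vN Jst_vS Jst_vR Jst_vC strong_crit Jst_p0S Jst_p0N])
  obtain V :: "dist set" and U and f :: "dist \<Rightarrow> dist" where hh: "subspace V \<and> dim V = 121 \<and> U \<subseteq> V \<and> U \<noteq> {} \<and>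
       openin (top_of_set V) U \<and> continuous_on U f \<and> inj_on f U \<and> f ` U \<subseteq> strong_ign_model"
    using ex unfolding c by (elim exE) (erule that)
  have h: "subspace V" "dim V = 121" "U \<subseteq> V" "U \<noteq> {}"
       "openin (top_of_set V) U" "continuous_on U f" "inj_on f U" "f ` U \<subseteq> strong_ign_model"
    using hh by simp_all
  show ?thesis
  proof (rule sa_dim_eqI[OF h gJ_linear _ _ c])
    show "inj_on (gJ Jst) strong_ign_model"
      by (rule gJ_inj[OF Jst_sub _ Jst_vN Jst_vS Jst_vR Jst_vC _ strong_ci])
         (auto simp: strong_ign_model_def NSt_def Sv_def)
    show "\<And>p w. w \<in> insert w0 (pc ` Jst) \<Longrightarrow> gJ Jst p $ w = 0"
      using gJ_w0 gJ_pc[OF Jst_sub] by auto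
  qed
qed


section \<open>NPSEM-IE\<close>

definition Apair :: "omega \<Rightarrow> bool \<times> bool" where
  "Apair = (\<lambda>w. (varApot False w, varApot True w))"
definition Ytup :: "omega \<Rightarrow> bool \<times> bool \<times> bool \<times> bool" where
  "Ytup = (\<lambda>w. (varYpot False False w, varYpot False True w, varYpot True False w, varYpot True True w))"

lemma Apair_simp[simp]: "Apair (l, a0, a1, y) = (a0, a1)"
  unfolding Apair_def varApot_def by (cases y) auto
lemma Ytup_simp[simp]: "Ytup (l, a0, a1, y) = y"
  unfolding Ytup_def varYpot_def by (cases y) auto
lemma varL_simp[simp]: "varL (l, a0, a1, y) = l"
  unfolding varL_def by (cases y) auto

lemma npsem_alt: "npsem_ie_model = {p \<in> prob_simplex. indep3 p varL Apair Ytup}"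
  unfolding npsem_ie_model_def Apair_def Ytup_def ..

lemma sum_omega: "(\<Sum>w\<in>(UNIV::omega set). F w) = (\<Sum>l\<in>UNIV. \<Sum>a\<in>UNIV. \<Sum>y\<in>UNIV. F (l, fst a, snd a, y))"
  by (simp add: sum_prod_univ)

definition prodv :: "(bool \<Rightarrow> real) \<Rightarrow> (bool \<times> bool \<Rightarrow> real) \<Rightarrow> (bool \<times> bool \<times> bool \<times> bool \<Rightarrow> real) \<Rightarrow> dist" where
  "prodv P Q R = (\<chi> w. P (varL w) * Q (Apair w) * R (Ytup w))"

lemma sum3_prod: fixes f :: "'a \<Rightarrow> real" and g :: "'b \<Rightarrow> real" and h :: "'c \<Rightarrow> real"
  shows "(\<Sum>l\<in>A. \<Sum>a\<in>B. \<Sum>y\<in>C. f l * g a * h y) = sum f A * sum g B * sum h C"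
proof -
  have i1: "(\<Sum>y\<in>C. f l * g a * h y) = f l * g a * sum h C" for l a
    by (simp add: sum_distrib_left)
  have i2: "(\<Sum>a\<in>B. f l * g a * sum h C) = f l * sum g B * sum h C" for l
  proof -
    have "(\<Sum>a\<in>B. f l * g a * sum h C) = (\<Sum>a\<in>B. g a * (f l * sum h C))"
      by (simp add: ac_simps)
    also have "\<dots> = sum g B * (f l * sum h C)" by (simp add: sum_distrib_right)
    finally show ?thesis by (simp add: ac_simps)
  qed
  have i3: "(\<Sum>l\<in>A. f l * sum g B * sum h C) = sum f A * sum g B * sum h C"
  proof -
    have "(\<Sum>l\<in>A. f l * sum g B * sum h C) = (\<Sum>l\<in>A. f l * (sum g B * sum h C))"
      by (simp add: ac_simps)
    also have "\<dots> = sum f A * (sum g B * sum h C)" by (simp add: sum_distrib_right)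
    finally show ?thesis by (simp add: ac_simps)
  qed
  show ?thesis by (simp only: i1 i2 i3)
qed

lemma prod_jprob: "jprob (prodv P Q R) (\<lambda>w. EL (varL w) \<and> EA (Apair w) \<and> EY (Ytup w)) =
   (\<Sum>l\<in>UNIV. if EL l then P l else 0) * (\<Sum>a\<in>UNIV. if EA a then Q a else 0) * (\<Sum>y\<in>UNIV. if EY y then R y else 0)"
proof -
  have "jprob (prodv P Q R) (\<lambda>w. EL (varL w) \<and> EA (Apair w) \<and> EY (Ytup w)) =
     (\<Sum>l\<in>UNIV. \<Sum>a\<in>UNIV. \<Sum>y\<in>UNIV. (if EL l then P l else 0) * (if EA a then Q a else 0) * (if EY y then R y else 0))"
    unfolding jprob_alt sum_omega prodv_def by (intro sum.cong refl) auto
  then show ?thesis by (simp only: sum3_prod)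
qed



definition AA :: "(bool \<times> bool) set" where "AA = UNIV - {(False,False)}"
definition YY :: "(bool \<times> bool \<times> bool \<times> bool) set" where "YY = UNIV - {(False,False,False,False)}"
definition dL :: omega where "dL = (True,False,False,False,False,False,False)"
definition dA :: "bool \<times> bool \<Rightarrow> omega" where "dA a = (False, fst a, snd a, False,False,False,False)"
definition dY :: "bool \<times> bool \<times> bool \<times> bool \<Rightarrow> omega" where "dY y = (False,False,False,y)"
definition DD :: "omega set" where "DD = insert dL (dA ` AA \<union> dY ` YY)"

lemma card_AA: "card AA = 3"
proof -
  have "card AA = CARD(bool \<times> bool) - 1" unfolding AA_def by (rule card_Diff_singleton) simp
  then show ?thesis by simp
qed
lemma card_YY: "card YY = 15"
proof -
  have "card YY = CARD(bool \<times> bool \<times> bool \<times> bool) - 1" unfolding YY_def by (rule card_Diff_singleton) simp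
  then show ?thesis by simp
qed

lemma dA_inj: "inj dA" unfolding dA_def inj_def by (auto simp: prod_eq_iff)
lemma dY_inj: "inj dY" unfolding dY_def inj_def by auto

lemma dA_dY: "a \<in> AA \<Longrightarrow> dA a \<noteq> dY y"
  unfolding AA_def dA_def dY_def by (cases a) auto
lemma dL_dA: "dL \<noteq> dA a" unfolding dL_def dA_def by simp
lemma dL_dY: "dL \<noteq> dY y" unfolding dL_def dY_def by simp

lemma card_DD: "card DD = 19"
proof -
  have c1: "card (dA ` AA) = 3" using card_AA card_image[OF inj_on_subset[OF dA_inj]] by simp
  have c2: "card (dY ` YY) = 15" using card_YY card_image[OF inj_on_subset[OF dY_inj]] by simp
  have disj: "dA ` AA \<inter> dY ` YY = {}" using dA_dY by (metis (no_types, lifting) disjoint_iff imageE)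
  have c3: "card (dA ` AA \<union> dY ` YY) = 18" using card_Un_disjoint[OF _ _ disj] c1 c2 by simp
  have "dL \<notin> dA ` AA \<union> dY ` YY" using dL_dA dL_dY by auto
  then show ?thesis unfolding DD_def using c3 by simp
qed

lemma card_DD': "card (UNIV - (UNIV - DD)) = 19"
  using card_DD by (simp add: Diff_Diff_Int)


definition gN :: "dist \<Rightarrow> dist" where
  "gN p = jprob p (\<lambda>w. varL w = True) *\<^sub>R ev dL
     + (\<Sum>a\<in>AA. jprob p (\<lambda>w. Apair w = a) *\<^sub>R ev (dA a))
     + (\<Sum>y\<in>YY. jprob p (\<lambda>w. Ytup w = y) *\<^sub>R ev (dY y))"

lemma gN_linear: "linear gN"
  unfolding gN_def
  by (rule linearI) (simp_all add: algebra_simps sum.distrib scaleR_add_left scale_sum_right)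

lemma gN_nth: "gN p $ w = (if w = dL then jprob p (\<lambda>w. varL w = True) else 0)
   + (\<Sum>a\<in>AA. if w = dA a then jprob p (\<lambda>w. Apair w = a) else 0)
   + (\<Sum>y\<in>YY. if w = dY y then jprob p (\<lambda>w. Ytup w = y) else 0)"
  unfolding gN_def by (simp add: if_distrib[of "\<lambda>x. _ * x"] cong: if_cong)

lemma gN_out: assumes "w \<in> UNIV - DD" shows "gN p $ w = 0"
proof -
  have w: "w \<noteq> dL" "\<And>a. a \<in> AA \<Longrightarrow> w \<noteq> dA a" "\<And>y. y \<in> YY \<Longrightarrow> w \<noteq> dY y"
    using assms unfolding DD_def by auto
  have "(\<Sum>a\<in>AA. if w = dA a then jprob p (\<lambda>w. Apair w = a) else 0) = 0"
    using w(2) by (intro sum.neutral) simp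
  moreover have "(\<Sum>y\<in>YY. if w = dY y then jprob p (\<lambda>w. Ytup w = y) else 0) = 0"
    using w(3) by (intro sum.neutral) simp
  ultimately show ?thesis unfolding gN_nth using w(1) by simp
qed

lemma gN_dL: "gN p $ dL = jprob p (\<lambda>w. varL w = True)"
  unfolding gN_nth using dL_dA dL_dY by simp

lemma gN_dA: assumes "a \<in> AA" shows "gN p $ dA a = jprob p (\<lambda>w. Apair w = a)"
proof -
  have "(\<Sum>a'\<in>AA. if dA a = dA a' then jprob p (\<lambda>w. Apair w = a') else 0)
     = (\<Sum>a'\<in>AA. if a = a' then jprob p (\<lambda>w. Apair w = a') else 0)"
    using dA_inj by (intro sum.cong refl) (auto simp: inj_eq)
  also have "\<dots> = jprob p (\<lambda>w. Apair w = a)" using assms by (simp add: sum.delta)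
  finally show ?thesis unfolding gN_nth using dL_dA[of a] dA_dY[OF assms] by (simp add: eq_commute[of dL])
qed

lemma gN_dY: assumes "y \<in> YY" shows "gN p $ dY y = jprob p (\<lambda>w. Ytup w = y)"
proof -
  have "(\<Sum>y'\<in>YY. if dY y = dY y' then jprob p (\<lambda>w. Ytup w = y') else 0)
     = (\<Sum>y'\<in>YY. if y = y' then jprob p (\<lambda>w. Ytup w = y') else 0)"
    using dY_inj by (intro sum.cong refl) (auto simp: inj_eq)
  also have "\<dots> = jprob p (\<lambda>w. Ytup w = y)" using assms by (simp add: sum.delta)
  moreover have "(\<Sum>a\<in>AA. if dY y = dA a then jprob p (\<lambda>w. Apair w = a) else 0) = 0"
    using dA_dY by (intro sum.neutral) (metis)
  ultimately show ?thesis unfolding gN_nth using dL_dY[of y] by (simp add: eq_commute[of dL])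
qed

lemma marg_eq:
  fixes Z :: "omega \<Rightarrow> 'z::finite"
  assumes p: "p \<in> prob_simplex" and q: "q \<in> prob_simplex"
    and h: "\<And>z. z \<noteq> zb \<Longrightarrow> jprob p (\<lambda>w. Z w = z) = jprob q (\<lambda>w. Z w = z)"
  shows "jprob p (\<lambda>w. Z w = z) = jprob q (\<lambda>w. Z w = z)"
proof -
  have tot: "(\<Sum>z\<in>UNIV. jprob r (\<lambda>w. Z w = z)) = 1" if "r \<in> prob_simplex" for r
  proof -
    have "(\<Sum>z\<in>UNIV. jprob r (\<lambda>w. Z w = z)) = (\<Sum>z\<in>UNIV. jprob r (\<lambda>w. Z w = z \<and> True))" by simp
    also have "\<dots> = 1" using jprob_vals[where Z=Z and p=r and E="\<lambda>_. True"] jprob_total[OF that] by simp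
    finally show ?thesis .
  qed
  have e: "jprob r (\<lambda>w. Z w = zb) = 1 - (\<Sum>z\<in>UNIV - {zb}. jprob r (\<lambda>w. Z w = z))" if "r \<in> prob_simplex" for r
    using tot[OF that] by (simp add: sum.remove[of UNIV zb])
  show ?thesis
  proof (cases "z = zb")
    case True
    have "(\<Sum>z\<in>UNIV - {zb}. jprob p (\<lambda>w. Z w = z)) = (\<Sum>z\<in>UNIV - {zb}. jprob q (\<lambda>w. Z w = z))"
      using h by (intro sum.cong) auto
    then show ?thesis using True e[OF p] e[OF q] by simp
  qed (rule h)
qed

lemma point_event: "jprob p (\<lambda>u. varL u = varL w \<and> Apair u = Apair w \<and> Ytup u = Ytup w) = p $ w"
proof -
  have "(\<lambda>u. varL u = varL w \<and> Apair u = Apair w \<and> Ytup u = Ytup w) = (\<lambda>u. u = w)"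
  proof
    fix u
    show "(varL u = varL w \<and> Apair u = Apair w \<and> Ytup u = Ytup w) = (u = w)"
      by (cases u; cases w) auto
  qed
  then show ?thesis unfolding jprob_def by simp
qed

lemma npsem_inj: "inj_on gN npsem_ie_model"
proof (rule inj_onI)
  fix p q assume p: "p \<in> npsem_ie_model" and q: "q \<in> npsem_ie_model" and e: "gN p = gN q"
  have pS: "p \<in> prob_simplex" "q \<in> prob_simplex" using p q unfolding npsem_alt by auto
  have ip: "indep3 p varL Apair Ytup" "indep3 q varL Apair Ytup" using p q unfolding npsem_alt by auto
  have mL: "jprob p (\<lambda>w. varL w = l) = jprob q (\<lambda>w. varL w = l)" for l
  proof (rule marg_eq[OF pS, where zb=False])
    fix z :: bool assume "z \<noteq> False"
    then show "jprob p (\<lambda>w. varL w = z) = jprob q (\<lambda>w. varL w = z)"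
      using gN_dL[of p] gN_dL[of q] e by simp
  qed
  have mA: "jprob p (\<lambda>w. Apair w = a) = jprob q (\<lambda>w. Apair w = a)" for a
  proof (rule marg_eq[OF pS, where zb="(False,False)"])
    fix z :: "bool \<times> bool" assume "z \<noteq> (False,False)"
    then have "z \<in> AA" unfolding AA_def by simp
    then show "jprob p (\<lambda>w. Apair w = z) = jprob q (\<lambda>w. Apair w = z)"
      using gN_dA[of z p] gN_dA[of z q] e by simp
  qed
  have mY: "jprob p (\<lambda>w. Ytup w = y) = jprob q (\<lambda>w. Ytup w = y)" for y
  proof (rule marg_eq[OF pS, where zb="(False,False,False,False)"])
    fix z :: "bool \<times> bool \<times> bool \<times> bool" assume "z \<noteq> (False,False,False,False)"
    then have "z \<in> YY" unfolding YY_def by simp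
    then show "jprob p (\<lambda>w. Ytup w = z) = jprob q (\<lambda>w. Ytup w = z)"
      using gN_dY[of z p] gN_dY[of z q] e by simp
  qed
  show "p = q" unfolding vec_eq_iff
  proof
    fix w
    have "p $ w = jprob p (\<lambda>u. varL u = varL w \<and> Apair u = Apair w \<and> Ytup u = Ytup w)"
      by (rule point_event[symmetric])
    also have "\<dots> = jprob p (\<lambda>u. varL u = varL w) * jprob p (\<lambda>u. Apair u = Apair w) * jprob p (\<lambda>u. Ytup u = Ytup w)"
      using ip(1)[unfolded indep3_def, rule_format, of "varL w" "Apair w" "Ytup w"] .
    also have "\<dots> = jprob q (\<lambda>u. varL u = varL w) * jprob q (\<lambda>u. Apair u = Apair w) * jprob q (\<lambda>u. Ytup u = Ytup w)"
      using mL mA mY by simp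
    also have "\<dots> = jprob q (\<lambda>u. varL u = varL w \<and> Apair u = Apair w \<and> Ytup u = Ytup w)"
      using ip(2)[unfolded indep3_def, rule_format, of "varL w" "Apair w" "Ytup w"] by (rule sym)
    also have "\<dots> = q $ w" by (rule point_event)
    finally show "p $ w = q $ w" .
  qed
qed


lemma prodv_L: "jprob (prodv P Q R) (\<lambda>w. varL w = l) = P l * sum Q UNIV * sum R UNIV"
  using prod_jprob[of P Q R "\<lambda>l'. l' = l" "\<lambda>_. True" "\<lambda>_. True"] by (simp add: sum.delta')

lemma prodv_A: "jprob (prodv P Q R) (\<lambda>w. Apair w = a) = sum P UNIV * Q a * sum R UNIV"
  using prod_jprob[of P Q R "\<lambda>_. True" "\<lambda>a'. a' = a" "\<lambda>_. True"] by (simp add: sum.delta')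

lemma prodv_Y: "jprob (prodv P Q R) (\<lambda>w. Ytup w = y) = sum P UNIV * sum Q UNIV * R y"
  using prod_jprob[of P Q R "\<lambda>_. True" "\<lambda>_. True" "\<lambda>y'. y' = y"] by (simp add: sum.delta')

lemma prodv_cell: "jprob (prodv P Q R) (\<lambda>w. varL w = l \<and> Apair w = a \<and> Ytup w = y) = P l * Q a * R y"
  using prod_jprob[of P Q R "\<lambda>l'. l' = l" "\<lambda>a'. a' = a" "\<lambda>y'. y' = y"] by (simp add: sum.delta')

lemma prodv_total: "jprob (prodv P Q R) (\<lambda>_. True) = sum P UNIV * sum Q UNIV * sum R UNIV"
  using prod_jprob[of P Q R "\<lambda>_. True" "\<lambda>_. True" "\<lambda>_. True"] by (simp add: sum.delta')

definition piN :: "dist \<Rightarrow> bool \<Rightarrow> real" where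
  "piN x l = (if l then 1/2 + x $ dL else 1/2 - x $ dL)"
definition alN :: "dist \<Rightarrow> bool \<times> bool \<Rightarrow> real" where
  "alN x a = (if a = (False,False) then 1/4 - (\<Sum>a'\<in>AA. x $ dA a') else 1/4 + x $ dA a)"
definition beN :: "dist \<Rightarrow> bool \<times> bool \<times> bool \<times> bool \<Rightarrow> real" where
  "beN x y = (if y = (False,False,False,False) then 1/16 - (\<Sum>y'\<in>YY. x $ dY y') else 1/16 + x $ dY y)"

definition fN :: "dist \<Rightarrow> dist" where "fN x = prodv (piN x) (alN x) (beN x)"

lemma sum_piN: "sum (piN x) UNIV = 1" unfolding piN_def by (simp add: UNIV_bool)

lemma sum_alN: "sum (alN x) UNIV = 1"
proof -
  have "sum (alN x) UNIV = alN x (False,False) + sum (alN x) AA"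
    unfolding AA_def by (simp add: sum.remove[of UNIV "(False,False)"])
  also have "sum (alN x) AA = (\<Sum>a\<in>AA. 1/4 + x $ dA a)"
    unfolding alN_def AA_def by (intro sum.cong) auto
  also have "\<dots> = 3/4 + (\<Sum>a\<in>AA. x $ dA a)" by (simp add: sum.distrib card_AA)
  finally show ?thesis unfolding alN_def by simp
qed

lemma sum_beN: "sum (beN x) UNIV = 1"
proof -
  have "sum (beN x) UNIV = beN x (False,False,False,False) + sum (beN x) YY"
    unfolding YY_def by (simp add: sum.remove[of UNIV "(False,False,False,False)"])
  also have "sum (beN x) YY = (\<Sum>y\<in>YY. 1/16 + x $ dY y)"
    unfolding beN_def YY_def by (intro sum.cong) auto
  also have "\<dots> = 15/16 + (\<Sum>y\<in>YY. x $ dY y)" by (simp add: sum.distrib card_YY)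
  finally show ?thesis unfolding beN_def by simp
qed

lemma fN_L: "jprob (fN x) (\<lambda>w. varL w = l) = piN x l"
  unfolding fN_def prodv_L sum_alN sum_beN by simp
lemma fN_A: "jprob (fN x) (\<lambda>w. Apair w = a) = alN x a"
  unfolding fN_def prodv_A sum_piN sum_beN by simp
lemma fN_Y: "jprob (fN x) (\<lambda>w. Ytup w = y) = beN x y"
  unfolding fN_def prodv_Y sum_piN sum_alN by simp

lemma cont_piN: "continuous_on UNIV (\<lambda>x. piN x l)"
  unfolding piN_def by (cases l) (simp_all add: continuous_intros)
lemma cont_alN: "continuous_on UNIV (\<lambda>x. alN x a)"
  unfolding alN_def by (cases "a = (False,False)") (simp_all add: continuous_intros)
lemma cont_beN: "continuous_on UNIV (\<lambda>x. beN x y)"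
  unfolding beN_def by (cases "y = (False,False,False,False)") (simp_all add: continuous_intros)

lemma cont_fN: "continuous_on UNIV fN"
  unfolding fN_def prodv_def
  by (intro continuous_on_vec_lambda allI continuous_on_mult cont_piN cont_alN cont_beN)

lemma sa_dim_npsem: "sa_dim npsem_ie_model = 19"
proof -
  have ex: "\<exists>(V::dist set) U (g::dist \<Rightarrow> dist). subspace V \<and> dim V = card (UNIV - (UNIV - DD)) \<and> U \<subseteq> V \<and> U \<noteq> {} \<and>
       openin (top_of_set V) U \<and> continuous_on U g \<and> inj_on g U \<and> g ` U \<subseteq> npsem_ie_model"
  proof (rule lower_helper[where Ob=UNIV and f=fN])
    show "continuous_on UNIV fN" by (rule cont_fN)
    show "\<forall>w. 0 < fN 0 $ w" unfolding fN_def prodv_def piN_def alN_def beN_def by simp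
    show "inj_on fN (coordsub (UNIV - DD))"
    proof (rule inj_onI)
      fix x y assume x: "x \<in> coordsub (UNIV - DD)" and y: "y \<in> coordsub (UNIV - DD)" and e: "fN x = fN y"
      have eL: "x $ dL = y $ dL"
        using fN_L[of x True] fN_L[of y True] e unfolding piN_def by simp
      have eA: "x $ dA a = y $ dA a" if "a \<in> AA" for a
        using fN_A[of x a] fN_A[of y a] e that unfolding alN_def AA_def by simp
      have eY: "x $ dY a = y $ dY a" if "a \<in> YY" for a
        using fN_Y[of x a] fN_Y[of y a] e that unfolding beN_def YY_def by simp
      show "x = y" unfolding vec_eq_iff
      proof
        fix w
        show "x $ w = y $ w"
        proof (cases "w \<in> DD")
          case True
          then show ?thesis unfolding DD_def using eL eA eY by auto
        next
          case False
          then show ?thesis using x y unfolding coordsub_def by simp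
        qed
      qed
    qed
    fix x assume pos: "\<forall>w. 0 < fN x $ w"
    show "fN x \<in> npsem_ie_model" unfolding npsem_alt
    proof (intro CollectI conjI)
      have nn: "\<forall>w. 0 \<le> fN x $ w"
      proof
        fix w show "0 \<le> fN x $ w" using pos[rule_format, of w] by simp
      qed
      show "fN x \<in> prob_simplex" unfolding simplex_iff
      proof (rule conjI)
        show "\<forall>w. 0 \<le> fN x $ w" by (rule nn)
        show "jprob (fN x) (\<lambda>_. True) = 1" by (simp add: fN_def prodv_total sum_piN sum_alN sum_beN)
      qed
      show "indep3 (fN x) varL Apair Ytup" unfolding indep3_def
        by (simp add: fN_L fN_A fN_Y) (simp add: fN_def prodv_cell)
    qed
  qed simp_all
  have c: "card (UNIV - (UNIV - DD)) = 19" by (rule card_DD')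
  obtain V :: "dist set" and U and f :: "dist \<Rightarrow> dist" where hh: "subspace V \<and> dim V = 19 \<and> U \<subseteq> V \<and> U \<noteq> {} \<and>
       openin (top_of_set V) U \<and> continuous_on U f \<and> inj_on f U \<and> f ` U \<subseteq> npsem_ie_model"
    using ex unfolding c by (elim exE) (erule that)
  have h: "subspace V" "dim V = 19" "U \<subseteq> V" "U \<noteq> {}"
       "openin (top_of_set V) U" "continuous_on U f" "inj_on f U" "f ` U \<subseteq> npsem_ie_model"
    using hh by simp_all
  show ?thesis
    by (rule sa_dim_eqI[OF h gN_linear npsem_inj gN_out c])
qed


theorem mainTheorem5:
  shows "sa_dim prob_simplex = 127 \<and> sa_dim weak_ign_model = 123 \<and>
         sa_dim strong_ign_model = 121 \<and> sa_dim npsem_ie_model = 19 \<and>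
         sa_dim weak_ign_model - sa_dim npsem_ie_model = 104"
  using sa_dim_simplex sa_dim_weak sa_dim_strong sa_dim_npsem by simp

end
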